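(* Let $\mathcal N$ be a feed-forward ReLU network with input dimension $n_{\mathrm{in}}$ whose parameter vector $\theta$ is random with a distribution absolutely continuous with respect to Lebesgue measure on $\mathbb R^{\#\mathrm{params}}$, and let $k\ge0$. With probability $1$, for every $x\in X_{\mathcal N,k}(\theta)$ there exists $\varepsilon>0$ (depending on $x,\theta$) such that $X_{\mathcal N,k}(\theta)\cap B_\varepsilon(x)=P\cap B_\varepsilon(x)$ for an affine subspace $P\subset\mathbb R^{n_{\mathrm{in}}}$ of dimension $n_{\mathrm{in}}-k$.
   Context: A feed-forward ReLU network $\mathcal N$ with input dimension $n_{\mathrm{in}}$ has hidden layers $1,\dots,d$; edges only between consecutive layers (arbitrary connectivity, no tied weights). A neuron $z$ in layer $1$ has pre-activation $z(x;\theta)=\sum_i w_{z,i}x_i$; a neuron $z$ in layer $\ell\ge2$ has pre-activation $z(x;\theta)=\sum_{z'}w_{z,z'}\max\{0,z'(x;\theta)-b_{z'}\}$ over neurons $z'$ of layer $\ell-1$ joined to $z$; $b_z$ is its bias. $\theta$ is the vector of all weights and biases. $H_z(\theta)=\{x:z(x;\theta)=b_z\}$. $X_{\mathcal N,k}(\theta)$ is the set of $x\in\mathbb R^{n_{\mathrm{in}}}$ for which there are exactly $k$ neurons $z$ with $x\in H_z(\theta)$. $B_\varepsilon(x)$ is the open Euclidean ball of radius $\varepsilon$ about $x$. *)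

theory Defs
  imports "HOL-Probability.Probability"
begin

text \<open>Architecture: hidden layers 1..d, layer l has width l neurons; a neuron is a pair
 (layer, index). E z' z means neuron z' is joined to neuron z; only edges between consecutive
 layers are used.\<close>

type_synonym neuron = "nat \<times> nat"

datatype 'i param = Win neuron 'i | Wt neuron neuron | Bs neuron

definition neurons :: "nat \<Rightarrow> (nat \<Rightarrow> nat) \<Rightarrow> neuron set" where
  "neurons d width = {(l, j). 1 \<le> l \<and> l \<le> d \<and> j < width l}"

definition params :: "nat \<Rightarrow> (nat \<Rightarrow> nat) \<Rightarrow> (neuron \<Rightarrow> neuron \<Rightarrow> bool) \<Rightarrow> 'i param set" where
  "params d width E =
     {Win z i | z i. z \<in> neurons d width \<and> fst z = 1}
   \<union> {Wt z z' | z z'. z \<in> neurons d width \<and> z' \<in> neurons d width \<and> fst z' + 1 = fst z \<and> E z' z}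
   \<union> {Bs z | z. z \<in> neurons d width}"

fun preact :: "(nat \<Rightarrow> nat) \<Rightarrow> (neuron \<Rightarrow> neuron \<Rightarrow> bool) \<Rightarrow> ('n::finite param \<Rightarrow> real)
                 \<Rightarrow> real ^ 'n \<Rightarrow> nat \<Rightarrow> nat \<Rightarrow> real" where
  "preact width E \<theta> x 0 j = 0"
| "preact width E \<theta> x (Suc 0) j = (\<Sum>i\<in>UNIV. \<theta> (Win (1, j) i) * x $ i)"
| "preact width E \<theta> x (Suc (Suc l)) j =
     (\<Sum>j'\<in>{j'. j' < width (Suc l) \<and> E (Suc l, j') (Suc (Suc l), j)}.
        \<theta> (Wt (Suc (Suc l), j) (Suc l, j')) *
        max 0 (preact width E \<theta> x (Suc l) j' - \<theta> (Bs (Suc l, j'))))"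

definition Hz :: "(nat \<Rightarrow> nat) \<Rightarrow> (neuron \<Rightarrow> neuron \<Rightarrow> bool) \<Rightarrow> ('n::finite param \<Rightarrow> real)
                 \<Rightarrow> neuron \<Rightarrow> (real ^ 'n) set" where
  "Hz width E \<theta> z = {x. preact width E \<theta> x (fst z) (snd z) = \<theta> (Bs z)}"

definition Xk :: "nat \<Rightarrow> (nat \<Rightarrow> nat) \<Rightarrow> (neuron \<Rightarrow> neuron \<Rightarrow> bool) \<Rightarrow> ('n::finite param \<Rightarrow> real)
                 \<Rightarrow> nat \<Rightarrow> (real ^ 'n) set" where
  "Xk d width E \<theta> k = {x. card {z \<in> neurons d width. x \<in> Hz width E \<theta> z} = k}"

definition param_lebesgue :: "nat \<Rightarrow> (nat \<Rightarrow> nat) \<Rightarrow> (neuron \<Rightarrow> neuron \<Rightarrow> bool)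
                 \<Rightarrow> ('n::finite param \<Rightarrow> real) measure" where
  "param_lebesgue d width E = PiM (params d width E) (\<lambda>_. lborel)"

end

theory Submission
  imports Defs
begin

lemma comp_meas:
  "(\<lambda>\<theta>. \<theta> p) \<in> borel_measurable (PiM I (\<lambda>_. lborel :: real measure))"
proof (cases "p \<in> I")
  case True
  then show ?thesis using measurable_component_singleton[of p I "\<lambda>_. lborel"] by simp
next
  case False
  have "(\<lambda>\<theta>. undefined) \<in> borel_measurable (PiM I (\<lambda>_. lborel :: real measure))" by simp
  then show ?thesis
    by (rule measurable_cong[THEN iffD1, rotated]) (auto simp: space_PiM PiE_arb[OF _ False])
qed

lemma section_null:
  fixes N :: "('a \<Rightarrow> real) set"
  assumes fin: "finite I" and p: "p \<in> I"
    and N: "N \<in> sets (PiM I (\<lambda>_. lborel))"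
    and sec: "\<And>\<theta> \<theta>'. \<theta> \<in> N \<Longrightarrow> \<theta>' \<in> N \<Longrightarrow> (\<And>q. q \<noteq> p \<Longrightarrow> \<theta> q = \<theta>' q) \<Longrightarrow> \<theta> p = \<theta>' p"
  shows "emeasure (PiM I (\<lambda>_. lborel)) N = 0"
proof -
  interpret product_sigma_finite "\<lambda>_. lborel :: real measure"
    by (simp add: product_sigma_finite_def lborel.sigma_finite_measure_axioms)
  define J where "J = I - {p}"
  have IJ: "I = insert p J" "p \<notin> J" "finite J" using p fin by (auto simp: J_def)
  have "emeasure (PiM I (\<lambda>_. lborel)) N = (\<integral>\<^sup>+ \<theta>. indicator N \<theta> \<partial>PiM I (\<lambda>_. lborel))"
    using N by simp
  also have "\<dots> = (\<integral>\<^sup>+ x. (\<integral>\<^sup>+ y. indicator N (x(p := y)) \<partial>lborel) \<partial>PiM J (\<lambda>_. lborel))"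
    unfolding IJ(1) by (rule product_nn_integral_insert) (use IJ N in auto)
  also have "\<dots> = (\<integral>\<^sup>+ x. 0 \<partial>PiM J (\<lambda>_. lborel))"
  proof -
    have "(\<integral>\<^sup>+ y. indicator N (x(p := y)) \<partial>lborel) = 0" for x
    proof -
    show "(\<integral>\<^sup>+ y. indicator N (x(p := y)) \<partial>lborel) = 0"
    proof (cases "\<exists>y0. x(p := y0) \<in> N")
      case False
      then show ?thesis by (simp add: indicator_def)
    next
      case True
      then obtain y0 where y0: "x(p := y0) \<in> N" by blast
      have AE0: "AE y in lborel. indicator N (x(p := y)) = (0::ennreal)"
      proof -
        have "AE y in lborel. y \<noteq> y0" by (rule AE_lborel_singleton)
        then show ?thesis
        proof (rule AE_mp, intro AE_I2 impI)
          fix y assume "y \<noteq> y0"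
          have "x(p := y) \<notin> N"
          proof
            assume "x(p := y) \<in> N"
            from sec[OF this y0] have "y = y0" by auto
            with \<open>y \<noteq> y0\<close> show False by simp
          qed
          then show "indicator N (x(p := y)) = (0::ennreal)" by simp
        qed
      qed
      then have "(\<integral>\<^sup>+ y. indicator N (x(p := y)) \<partial>lborel) = (\<integral>\<^sup>+ (y::real). 0 \<partial>lborel)" using nn_integral_cong_AE[OF AE0] by simp
      then show ?thesis by simp
    qed
    qed
    then show ?thesis by simp
  qed
  finally show ?thesis by simp
qed



fun cvec :: "(nat \<Rightarrow> nat) \<Rightarrow> (neuron \<Rightarrow> neuron \<Rightarrow> bool) \<Rightarrow> neuron set \<Rightarrow> ('n::finite param \<Rightarrow> real)
                 \<Rightarrow> nat \<Rightarrow> nat \<Rightarrow> real ^ 'n" where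
  "cvec width E A \<theta> 0 j = 0"
| "cvec width E A \<theta> (Suc 0) j = (\<chi> i. \<theta> (Win (1, j) i))"
| "cvec width E A \<theta> (Suc (Suc l)) j =
     (\<Sum>j'\<in>{j'. j' < width (Suc l) \<and> E (Suc l, j') (Suc (Suc l), j)}.
        \<theta> (Wt (Suc (Suc l), j) (Suc l, j')) *\<^sub>R
        (if (Suc l, j') \<in> A then cvec width E A \<theta> (Suc l) j' else 0))"

fun dval :: "(nat \<Rightarrow> nat) \<Rightarrow> (neuron \<Rightarrow> neuron \<Rightarrow> bool) \<Rightarrow> neuron set \<Rightarrow> ('n::finite param \<Rightarrow> real)
                 \<Rightarrow> nat \<Rightarrow> nat \<Rightarrow> real" where
  "dval width E A \<theta> 0 j = 0"
| "dval width E A \<theta> (Suc 0) j = 0"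
| "dval width E A \<theta> (Suc (Suc l)) j =
     (\<Sum>j'\<in>{j'. j' < width (Suc l) \<and> E (Suc l, j') (Suc (Suc l), j)}.
        \<theta> (Wt (Suc (Suc l), j) (Suc l, j')) *
        (if (Suc l, j') \<in> A then dval width E A \<theta> (Suc l) j' - \<theta> (Bs (Suc l, j')) else 0))"

definition lin where
  "lin width E A \<theta> y l j = cvec width E A \<theta> l j \<bullet> y + dval width E A \<theta> l j"

lemma lin_0: "lin width E A \<theta> y 0 j = 0"
  by (simp add: lin_def)

lemma lin_1: "lin width E A \<theta> y (Suc 0) j = (\<Sum>i\<in>UNIV. \<theta> (Win (1, j) i) * y $ i)"
  by (simp add: lin_def inner_vec_def)

lemma lin_SS: "lin width E A \<theta> y (Suc (Suc l)) j =
     (\<Sum>j'\<in>{j'. j' < width (Suc l) \<and> E (Suc l, j') (Suc (Suc l), j)}.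
        \<theta> (Wt (Suc (Suc l), j) (Suc l, j')) *
        (if (Suc l, j') \<in> A then lin width E A \<theta> y (Suc l) j' - \<theta> (Bs (Suc l, j')) else 0))"
  by (simp add: lin_def inner_sum_left sum.distrib[symmetric] algebra_simps if_distrib
      cong: sum.cong if_cong)

lemma neuron_pred:
  assumes "(Suc (Suc l), j) \<in> neurons d width" "j' < width (Suc l)"
  shows "(Suc l, j') \<in> neurons d width"
  using assms by (auto simp: neurons_def)

lemma preact_eq_lin:
  fixes \<theta> :: "'n::finite param \<Rightarrow> real"
  assumes A: "A = {z \<in> neurons d width. preact width E \<theta> x (fst z) (snd z) > \<theta> (Bs z)}"
    and S: "S = {z \<in> neurons d width. preact width E \<theta> x (fst z) (snd z) = \<theta> (Bs z)}"
    and H1: "\<And>z. z \<in> neurons d width \<Longrightarrow> preact width E \<theta> x (fst z) (snd z) > \<theta> (Bs z) \<Longrightarrow>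
               preact width E \<theta> y (fst z) (snd z) > \<theta> (Bs z)"
    and H1': "\<And>z. z \<in> neurons d width \<Longrightarrow> preact width E \<theta> x (fst z) (snd z) < \<theta> (Bs z) \<Longrightarrow>
               preact width E \<theta> y (fst z) (snd z) < \<theta> (Bs z)"
    and H2: "\<And>z. z \<in> S \<Longrightarrow> preact width E \<theta> y (fst z) (snd z) = \<theta> (Bs z) \<or>
                lin width E A \<theta> y (fst z) (snd z) = \<theta> (Bs z)"
  shows "(l, j) \<in> neurons d width \<Longrightarrow> preact width E \<theta> y l j = lin width E A \<theta> y l j"
proof (induction l arbitrary: j rule: less_induct)
  case (less l)
  consider "l = 0" | "l = Suc 0" | l' where "l = Suc (Suc l')"
    by (metis not0_implies_Suc)
  then show ?case
  proof cases
    case 1 then show ?thesis by (simp add: lin_0)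
  next
    case 2 then show ?thesis by (simp add: lin_1)
  next
    case 3
    show ?thesis
      unfolding 3 lin_SS preact.simps
    proof (rule sum.cong[OF refl])
      fix j' assume j': "j' \<in> {j'. j' < width (Suc l') \<and> E (Suc l', j') (Suc (Suc l'), j)}"
      let ?z = "(Suc l', j')"
      have zN: "?z \<in> neurons d width" using neuron_pred[of l' j d width j'] less.prems 3 j' by auto
      have IH: "preact width E \<theta> y (Suc l') j' = lin width E A \<theta> y (Suc l') j'"
        using less.IH[of "Suc l'" j'] zN 3 by auto
      show "\<theta> (Wt (Suc (Suc l'), j) ?z) * max 0 (preact width E \<theta> y (Suc l') j' - \<theta> (Bs ?z)) =
            \<theta> (Wt (Suc (Suc l'), j) ?z) *
            (if ?z \<in> A then lin width E A \<theta> y (Suc l') j' - \<theta> (Bs ?z) else 0)"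
      proof (cases "preact width E \<theta> x (Suc l') j' = \<theta> (Bs ?z)")
        case True
        then have "?z \<in> S" "?z \<notin> A" using zN S A by auto
        with H2[of ?z] IH show ?thesis by auto
      next
        case False
        then consider "preact width E \<theta> x (Suc l') j' > \<theta> (Bs ?z)" | "preact width E \<theta> x (Suc l') j' < \<theta> (Bs ?z)"
          by linarith
        then show ?thesis
        proof cases
          case 1
          with H1[OF zN] A zN IH show ?thesis by auto
        next
          case 2
          with H1'[OF zN] A zN IH show ?thesis by auto
        qed
      qed
    qed
  qed
qed



lemma preact_cont: "continuous_on UNIV (\<lambda>x. preact width E \<theta> x l j)"
proof (induction l arbitrary: j rule: less_induct)
  case (less l)
  consider "l = 0" | "l = Suc 0" | l' where "l = Suc (Suc l')"
    by (metis not0_implies_Suc)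
  then show ?case
  proof cases
    case 1 then show ?thesis by simp
  next
    case 2 then show ?thesis by (simp add: continuous_intros)
  next
    case 3
    have "continuous_on UNIV (\<lambda>x. preact width E \<theta> x (Suc l') j')" for j'
      using less.IH[of "Suc l'"] 3 by simp
    then show ?thesis unfolding 3 preact.simps by (intro continuous_intros) auto
  qed
qed

lemma finite_neurons: "finite (neurons d width)"
proof -
  have "neurons d width \<subseteq> (SIGMA l:{..d}. {..<width l})" by (auto simp: neurons_def)
  then show ?thesis by (rule finite_subset) auto
qed

lemma local_structure:
  fixes \<theta> :: "'n::finite param \<Rightarrow> real"
  assumes x: "x \<in> Xk d width E \<theta> k"
  defines "S \<equiv> {z \<in> neurons d width. x \<in> Hz width E \<theta> z}"
    and "A \<equiv> {z \<in> neurons d width. preact width E \<theta> x (fst z) (snd z) > \<theta> (Bs z)}"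
  shows "card S = k"
    and "\<exists>\<epsilon>>0. \<forall>y\<in>ball x \<epsilon>. (y \<in> Xk d width E \<theta> k \<longleftrightarrow>
            (\<forall>z\<in>S. lin width E A \<theta> y (fst z) (snd z) = \<theta> (Bs z)))"
proof -
  show cardS: "card S = k" using x by (simp add: Xk_def S_def)
  let ?f = "\<lambda>z y. preact width E \<theta> y (fst z) (snd z)"
  have ev: "eventually (\<lambda>y. \<forall>z\<in>neurons d width.
      (?f z x > \<theta> (Bs z) \<longrightarrow> ?f z y > \<theta> (Bs z)) \<and> (?f z x < \<theta> (Bs z) \<longrightarrow> ?f z y < \<theta> (Bs z))) (nhds x)"
  proof (rule eventually_ball_finite[OF finite_neurons], intro ballI)
    fix z
    have "isCont (?f z) x"
      using preact_cont[of width E \<theta> "fst z" "snd z"] by (simp add: continuous_on_eq_continuous_at)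
    then have t: "(?f z \<longlongrightarrow> ?f z x) (nhds x)"
      using tendsto_at_iff_tendsto_nhds[of "?f z" x] by (simp add: isCont_def)
    show "eventually (\<lambda>y. (?f z x > \<theta> (Bs z) \<longrightarrow> ?f z y > \<theta> (Bs z)) \<and> (?f z x < \<theta> (Bs z) \<longrightarrow> ?f z y < \<theta> (Bs z))) (nhds x)"
    proof (cases "?f z x > \<theta> (Bs z)")
      case True
      then have "eventually (\<lambda>y. ?f z y > \<theta> (Bs z)) (nhds x)" using order_tendstoD(1)[OF t] by blast
      then show ?thesis by eventually_elim (use True in auto)
    next
      case False
      show ?thesis
      proof (cases "?f z x < \<theta> (Bs z)")
        case True
        then have "eventually (\<lambda>y. ?f z y < \<theta> (Bs z)) (nhds x)" using order_tendstoD(2)[OF t] by blast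
        then show ?thesis by eventually_elim (use True in auto)
      next
        case F2: False
        show ?thesis using False F2 by simp
      qed
    qed
  qed
  then obtain \<epsilon> where \<epsilon>: "\<epsilon> > 0" and H: "\<And>y. dist y x < \<epsilon> \<Longrightarrow> \<forall>z\<in>neurons d width.
      (?f z x > \<theta> (Bs z) \<longrightarrow> ?f z y > \<theta> (Bs z)) \<and> (?f z x < \<theta> (Bs z) \<longrightarrow> ?f z y < \<theta> (Bs z))"
    unfolding eventually_nhds_metric by blast
  have S': "S = {z \<in> neurons d width. ?f z x = \<theta> (Bs z)}" by (simp add: S_def Hz_def)
  show "\<exists>\<epsilon>>0. \<forall>y\<in>ball x \<epsilon>. (y \<in> Xk d width E \<theta> k \<longleftrightarrow>
            (\<forall>z\<in>S. lin width E A \<theta> y (fst z) (snd z) = \<theta> (Bs z)))"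
  proof (intro exI[of _ \<epsilon>] conjI ballI)
    show "0 < \<epsilon>" by (fact \<epsilon>)
  next
    fix y assume "y \<in> ball x \<epsilon>"
    then have Hy: "\<forall>z\<in>neurons d width.
      (?f z x > \<theta> (Bs z) \<longrightarrow> ?f z y > \<theta> (Bs z)) \<and> (?f z x < \<theta> (Bs z) \<longrightarrow> ?f z y < \<theta> (Bs z))"
      using H by (simp add: dist_commute)
    have sub: "{z \<in> neurons d width. y \<in> Hz width E \<theta> z} \<subseteq> S"
    proof
      fix z assume z: "z \<in> {z \<in> neurons d width. y \<in> Hz width E \<theta> z}"
      then have zN: "z \<in> neurons d width" and "?f z y = \<theta> (Bs z)" by (auto simp: Hz_def)
      with Hy have "?f z x = \<theta> (Bs z)" by (metis less_irrefl linorder_neqE_linordered_idom)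
      then show "z \<in> S" using zN S' by simp
    qed
    have finS: "finite S" using finite_neurons S_def by simp
    have Xy: "y \<in> Xk d width E \<theta> k \<longleftrightarrow> (\<forall>z\<in>S. ?f z y = \<theta> (Bs z))"
    proof
      assume "y \<in> Xk d width E \<theta> k"
      then have "card {z \<in> neurons d width. y \<in> Hz width E \<theta> z} = card S" using cardS by (simp add: Xk_def)
      then have "{z \<in> neurons d width. y \<in> Hz width E \<theta> z} = S" using card_subset_eq[OF finS sub] by simp
      then show "\<forall>z\<in>S. ?f z y = \<theta> (Bs z)" by (auto simp: Hz_def)
    next
      assume "\<forall>z\<in>S. ?f z y = \<theta> (Bs z)"
      then have "{z \<in> neurons d width. y \<in> Hz width E \<theta> z} = S" using sub by (auto simp: Hz_def S_def)
      then show "y \<in> Xk d width E \<theta> k" using cardS by (simp add: Xk_def)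
    qed
    have PL: "(l, j) \<in> neurons d width \<Longrightarrow> preact width E \<theta> y l j = lin width E A \<theta> y l j"
      if H2: "\<And>z. z \<in> S \<Longrightarrow> ?f z y = \<theta> (Bs z) \<or> lin width E A \<theta> y (fst z) (snd z) = \<theta> (Bs z)" for l j
      by (rule preact_eq_lin[OF A_def[THEN meta_eq_to_obj_eq] S' _ _ H2]) (use Hy in auto)
    show "y \<in> Xk d width E \<theta> k \<longleftrightarrow> (\<forall>z\<in>S. lin width E A \<theta> y (fst z) (snd z) = \<theta> (Bs z))"
    proof
      assume "y \<in> Xk d width E \<theta> k"
      then have e: "\<forall>z\<in>S. ?f z y = \<theta> (Bs z)" using Xy by simp
      show "\<forall>z\<in>S. lin width E A \<theta> y (fst z) (snd z) = \<theta> (Bs z)"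
      proof
        fix z assume "z \<in> S"
        then have "z \<in> neurons d width" using S_def by simp
        then show "lin width E A \<theta> y (fst z) (snd z) = \<theta> (Bs z)"
          using PL[of "fst z" "snd z"] e \<open>z \<in> S\<close> by auto
      qed
    next
      assume e: "\<forall>z\<in>S. lin width E A \<theta> y (fst z) (snd z) = \<theta> (Bs z)"
      have "\<forall>z\<in>S. ?f z y = \<theta> (Bs z)"
      proof
        fix z assume "z \<in> S"
        then have "z \<in> neurons d width" using S_def by simp
        then show "?f z y = \<theta> (Bs z)"
          using PL[of "fst z" "snd z"] e \<open>z \<in> S\<close> by auto
      qed
      then show "y \<in> Xk d width E \<theta> k" using Xy by simp
    qed
  qed
qed



lemma affine_solution_set:
  fixes c :: "'a \<Rightarrow> real ^ 'n" and g :: "'a \<Rightarrow> real"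
  assumes x: "\<forall>z\<in>S. c z \<bullet> x = g z"
  defines "P \<equiv> {y. \<forall>z\<in>S. c z \<bullet> y = g z}"
  shows "affine P" and "aff_dim P = int CARD('n) - int (dim (c ` S))"
proof -
  show "affine P"
    unfolding affine_def
  proof (intro ballI allI impI)
    fix a b u v assume a: "a \<in> P" and b: "b \<in> P" and uv: "u + v = (1::real)"
    have "c z \<bullet> (u *\<^sub>R a + v *\<^sub>R b) = g z" if "z \<in> S" for z
    proof -
      have "c z \<bullet> (u *\<^sub>R a + v *\<^sub>R b) = u * (c z \<bullet> a) + v * (c z \<bullet> b)"
        by (simp add: inner_add_right)
      also have "\<dots> = (u + v) * g z" using a b that by (simp add: P_def algebra_simps)
      finally show ?thesis using uv by simp
    qed
    then show "u *\<^sub>R a + v *\<^sub>R b \<in> P" by (simp add: P_def)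
  qed
  define K where "K = {v. \<forall>z\<in>S. c z \<bullet> v = 0}"
  have PK: "P = (+) x ` K"
  proof (intro set_eqI iffI)
    fix y assume "y \<in> P"
    then have "y - x \<in> K" using x by (auto simp: P_def K_def inner_diff_right)
    then show "y \<in> (+) x ` K" by (rule rev_image_eqI) simp
  next
    fix y assume "y \<in> (+) x ` K"
    then show "y \<in> P" using x by (auto simp: P_def K_def inner_add_right)
  qed
  have K2: "K = {y \<in> UNIV. \<forall>a \<in> span (c ` S). orthogonal a y}"
  proof (intro set_eqI iffI)
    fix v assume "v \<in> K"
    then have o: "\<And>b. b \<in> c ` S \<Longrightarrow> orthogonal v b" by (auto simp: K_def orthogonal_def inner_commute)
    have "orthogonal a v" if "a \<in> span (c ` S)" for a
      using orthogonal_to_span[OF that o] by (simp add: orthogonal_commute)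
    then show "v \<in> {y \<in> UNIV. \<forall>a \<in> span (c ` S). orthogonal a y}" by simp
  next
    fix v assume "v \<in> {y \<in> UNIV. \<forall>a \<in> span (c ` S). orthogonal a y}"
    then have "\<And>z. z \<in> S \<Longrightarrow> orthogonal (c z) v" by (simp add: span_base)
    then show "v \<in> K" by (simp add: K_def orthogonal_def)
  qed
  have "dim K + dim (span (c ` S)) = dim (UNIV :: (real^'n) set)"
    unfolding K2 by (rule dim_subspace_orthogonal_to_vectors) (auto simp: subspace_span)
  then have dK: "dim K = CARD('n) - dim (c ` S)" by simp
  have "subspace K" unfolding K2 using subspace_orthogonal_to_vectors[of "span (c ` S)"] by simp
  then have "aff_dim K = int (dim K)" by (rule aff_dim_subspace)
  moreover have "dim (c ` S) \<le> CARD('n)" by (rule dim_subset_UNIV_cart)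
  ultimately show "aff_dim P = int CARD('n) - int (dim (c ` S))"
    using dK by (simp add: PK aff_dim_translation_eq)
qed



fun gproj :: "('b \<Rightarrow> 'v::real_inner) \<Rightarrow> 'b list \<Rightarrow> 'v \<Rightarrow> 'v" where
  "gproj v [] u = 0"
| "gproj v (t # ts) u =
    (let w = v t - gproj v ts (v t)
     in gproj v ts u + (if w = 0 then 0 else (inner u w / inner w w) *\<^sub>R w))"

lemma gproj_props:
  "gproj v ts u \<in> span (v ` set ts) \<and> (\<forall>a\<in>set ts. inner (u - gproj v ts u) (v a) = 0)"
proof (induction ts arbitrary: u)
  case Nil
  then show ?case by simp
next
  case (Cons t ts)
  define p where "p = gproj v ts u"
  define q where "q = gproj v ts (v t)"
  define w where "w = v t - q"
  define \<alpha> where "\<alpha> = (if w = 0 then 0 else inner u w / inner w w)"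
  have eq: "gproj v (t # ts) u = p + \<alpha> *\<^sub>R w"
    by (simp add: p_def q_def w_def \<alpha>_def Let_def)
  have p: "p \<in> span (v ` set ts)" "\<forall>a\<in>set ts. inner (u - p) (v a) = 0"
    using Cons.IH[of u] by (auto simp: p_def)
  have q: "q \<in> span (v ` set ts)" "\<forall>a\<in>set ts. inner (v t - q) (v a) = 0"
    using Cons.IH[of "v t"] by (auto simp: q_def)
  have sub: "span (v ` set ts) \<subseteq> span (v ` set (t # ts))" by (intro span_mono) auto
  have vt: "v t \<in> span (v ` set (t # ts))" by (intro span_base) auto
  have wsp: "w \<in> span (v ` set (t # ts))"
    unfolding w_def using q(1) sub vt by (blast intro: span_diff)
  have mem: "p + \<alpha> *\<^sub>R w \<in> span (v ` set (t # ts))"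
    using p(1) sub wsp by (blast intro: span_add span_scale)
  have w_orth: "inner w (v a) = 0" if "a \<in> set ts" for a
    using q(2) that by (simp add: w_def)
  have orth_span: "inner r b = 0" if "b \<in> span (v ` set ts)" "\<forall>a\<in>set ts. inner r (v a) = 0" for r b
  proof -
    have "orthogonal r b"
      by (rule orthogonal_to_span[OF that(1)]) (use that(2) in \<open>auto simp: orthogonal_def\<close>)
    then show ?thesis by (simp add: orthogonal_def)
  qed
  have o1: "\<forall>a\<in>set ts. inner (u - (p + \<alpha> *\<^sub>R w)) (v a) = 0"
    using p(2) w_orth by (simp add: inner_diff_left inner_add_left)
  have pw: "inner p w = 0"
    using orth_span[of p w] p(1) w_orth by (simp add: inner_commute)
  have o2: "inner (u - (p + \<alpha> *\<^sub>R w)) w = 0"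
  proof (cases "w = 0")
    case True then show ?thesis by simp
  next
    case False
    then have "inner w w \<noteq> 0" by simp
    then show ?thesis using False pw by (simp add: \<alpha>_def inner_diff_left inner_add_left)
  qed
  have o3: "inner (u - (p + \<alpha> *\<^sub>R w)) q = 0"
    using orth_span[OF q(1) o1] .
  have "v t = w + q" by (simp add: w_def)
  then have o4: "inner (u - (p + \<alpha> *\<^sub>R w)) (v t) = 0"
    using o2 o3 by (simp add: inner_add_right)
  show ?case unfolding eq using mem o1 o4 by simp
qed

lemma gproj_span_iff: "u \<in> span (v ` set ts) \<longleftrightarrow> gproj v ts u = u"
proof
  assume u: "u \<in> span (v ` set ts)"
  define r where "r = u - gproj v ts u"
  have "r \<in> span (v ` set ts)" unfolding r_def using u gproj_props[of v ts u] by (blast intro: span_diff)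
  moreover have "\<forall>a\<in>set ts. inner r (v a) = 0" using gproj_props[of v ts u] by (simp add: r_def)
  ultimately have "orthogonal r r"
    by (intro orthogonal_to_span[of r "v ` set ts" r]) (auto simp: orthogonal_def)
  then have "r = 0" by (simp add: orthogonal_def)
  then show "gproj v ts u = u" by (simp add: r_def)
next
  assume "gproj v ts u = u"
  then show "u \<in> span (v ` set ts)" using gproj_props[of v ts u] by metis
qed

lemma gproj_measurable:
  fixes v :: "'b \<Rightarrow> 'a \<Rightarrow> 'v::euclidean_space"
  assumes v: "\<And>t. v t \<in> borel_measurable M"
  shows "u \<in> borel_measurable M \<Longrightarrow> (\<lambda>x. gproj (\<lambda>t. v t x) ts (u x)) \<in> borel_measurable M"
proof (induction ts arbitrary: u)
  case Nil
  then show ?case by simp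
next
  case (Cons t ts)
  have q[measurable]: "(\<lambda>x. gproj (\<lambda>t. v t x) ts (v t x)) \<in> borel_measurable M"
    using Cons.IH[OF v] .
  have p[measurable]: "(\<lambda>x. gproj (\<lambda>t. v t x) ts (u x)) \<in> borel_measurable M"
    using Cons.IH[OF Cons.prems] .
  have [measurable]: "v t \<in> borel_measurable M" "u \<in> borel_measurable M" using v Cons.prems by auto
  show ?case by (simp add: Let_def) measurable
qed



lemma finite_params: "finite (params d width E :: 'i::finite param set)"
proof -
  have "params d width E \<subseteq> (\<lambda>(z, i). Win z i) ` (neurons d width \<times> (UNIV :: 'i set))
      \<union> (\<lambda>(z, z'). Wt z z') ` (neurons d width \<times> neurons d width) \<union> Bs ` neurons d width"
    by (auto simp: params_def)
  moreover have "finite ((\<lambda>(z, i). Win z i) ` (neurons d width \<times> (UNIV :: 'i set))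
      \<union> (\<lambda>(z, z'). Wt z z') ` (neurons d width \<times> neurons d width) \<union> Bs ` neurons d width)"
    using finite_neurons by auto
  ultimately show ?thesis by (rule finite_subset)
qed

lemma vec_as_sum: "(\<chi> i. f i) = (\<Sum>i\<in>UNIV. f i *\<^sub>R axis i (1::real))"
  by (simp add: vec_eq_iff sum_component axis_def if_distrib sum.delta cong: if_cong)

lemma cvec_meas:
  "(\<lambda>\<theta>. cvec width E A \<theta> l j) \<in> borel_measurable (PiM I (\<lambda>_. lborel :: real measure))"
proof (induction l arbitrary: j rule: less_induct)
  case (less l)
  note [measurable] = comp_meas
  consider "l = 0" | "l = Suc 0" | l' where "l = Suc (Suc l')"
    by (metis not0_implies_Suc)
  then show ?case
  proof cases
    case 1 then show ?thesis by simp
  next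
    case 2 then show ?thesis by (simp only: cvec.simps vec_as_sum) measurable
  next
    case 3
    have [measurable]: "(\<lambda>\<theta>. cvec width E A \<theta> (Suc l') j') \<in> borel_measurable (PiM I (\<lambda>_. lborel :: real measure))" for j'
      using less.IH[of "Suc l'"] 3 by simp
    show ?thesis unfolding 3 cvec.simps by measurable
  qed
qed

lemma dval_meas:
  "(\<lambda>\<theta>. dval width E A \<theta> l j) \<in> borel_measurable (PiM I (\<lambda>_. lborel :: real measure))"
proof (induction l arbitrary: j rule: less_induct)
  case (less l)
  note [measurable] = comp_meas
  consider "l = 0" | "l = Suc 0" | l' where "l = Suc (Suc l')"
    by (metis not0_implies_Suc)
  then show ?case
  proof cases
    case 1 then show ?thesis by simp
  next
    case 2 then show ?thesis by simp
  next
    case 3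
    have [measurable]: "(\<lambda>\<theta>. dval width E A \<theta> (Suc l') j') \<in> borel_measurable (PiM I (\<lambda>_. lborel :: real measure))" for j'
      using less.IH[of "Suc l'"] 3 by simp
    show ?thesis unfolding 3 dval.simps by measurable
  qed
qed

lemma cvec_indep:
  assumes "\<And>q. (\<forall>w. q \<noteq> Bs w) \<Longrightarrow> \<theta> q = \<theta>' q"
  shows "cvec width E A \<theta> l j = cvec width E A \<theta>' l j"
proof (induction l arbitrary: j rule: less_induct)
  case (less l)
  consider "l = 0" | "l = Suc 0" | l' where "l = Suc (Suc l')"
    by (metis not0_implies_Suc)
  then show ?case
  proof cases
    case 1 then show ?thesis by simp
  next
    case 2 then show ?thesis by (simp add: assms)
  next
    case 3
    have ih: "cvec width E A \<theta> (Suc l') j' = cvec width E A \<theta>' (Suc l') j'" for j'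
      using less.IH[of "Suc l'"] 3 by simp
    show ?thesis unfolding 3 cvec.simps using ih assms by (intro sum.cong refl) auto
  qed
qed

lemma dval_indep:
  assumes th: "\<And>q. q \<noteq> Bs z \<Longrightarrow> \<theta> q = \<theta>' q"
  shows "l \<le> fst z \<Longrightarrow> dval width E A \<theta> l j = dval width E A \<theta>' l j"
proof (induction l arbitrary: j rule: less_induct)
  case (less l)
  consider "l = 0" | "l = Suc 0" | l' where "l = Suc (Suc l')"
    by (metis not0_implies_Suc)
  then show ?case
  proof cases
    case 1 then show ?thesis by simp
  next
    case 2 then show ?thesis by simp
  next
    case 3
    have ih: "dval width E A \<theta> (Suc l') j' = dval width E A \<theta>' (Suc l') j'" for j'
      using less.IH[of "Suc l'"] less.prems 3 by simp
    have e1: "\<theta> (Bs (Suc l', j')) = \<theta>' (Bs (Suc l', j'))" for j'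
      using less.prems 3 by (intro th) auto
    have e2: "\<theta> (Wt a b) = \<theta>' (Wt a b)" for a b
      by (intro th) simp
    show ?thesis unfolding 3 dval.simps using ih e1 e2 by (intro sum.cong refl) auto
  qed
qed


lemma step_alg:
  fixes c :: "'a \<Rightarrow> real ^ 'n" and e :: "'a \<Rightarrow> real"
  assumes finT: "finite T" and zT: "z \<notin> T"
    and y: "\<forall>t\<in>insert z T. c t \<bullet> y + e t = 0"
    and dT: "dim (c ` T) = card T"
    and dS: "dim (c ` insert z T) \<noteq> card (insert z T)"
  shows "(c z, e z) \<in> span ((\<lambda>t. (c t, e t)) ` T) \<and> (0, 1) \<notin> span ((\<lambda>t. (c t, e t)) ` T)"
proof -
  define R where "R = (\<lambda>t. (c t, e t))"
  have cz: "c z \<in> span (c ` T)"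
  proof (rule ccontr)
    assume "c z \<notin> span (c ` T)"
    then have "dim (c ` insert z T) = dim (c ` T) + 1" by (simp add: dim_insert)
    then show False using dS dT finT zT by simp
  qed
  define \<phi> where "\<phi> = (\<lambda>p::(real^'n) \<times> real. fst p \<bullet> y + snd p)"
  have lin\<phi>: "linear \<phi>"
    by (simp add: linear_iff \<phi>_def inner_add_left algebra_simps)
  have \<phi>0: "\<phi> p = 0" if "p \<in> span (R ` T)" for p
    by (rule real_vector.linear_eq_0_on_span[OF lin\<phi> _ that]) (use y in \<open>auto simp: R_def \<phi>_def\<close>)
  have "c ` T = fst ` (R ` T)" by (simp add: R_def image_image)
  then have "span (c ` T) = fst ` span (R ` T)" by (simp add: span_linear_image[OF linear_fst])
  with cz obtain \<rho> where \<rho>: "\<rho> \<in> span (R ` T)" "fst \<rho> = c z" by auto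
  have "snd \<rho> = e z" using \<phi>0[OF \<rho>(1)] \<rho>(2) y by (simp add: \<phi>_def)
  then have "\<rho> = R z" using \<rho>(2) by (simp add: R_def prod_eq_iff)
  with \<rho>(1) have part1: "R z \<in> span (R ` T)" by simp
  have part2: "(0, 1) \<notin> span (R ` T)"
  proof
    assume o1: "(0, 1) \<in> span (R ` T)"
    define emb where "emb = (\<lambda>v::real^'n. (v, 0::real))"
    have "emb (c t) \<in> span (R ` T)" if "t \<in> T" for t
    proof -
      have s: "e t *\<^sub>R (0::real^'n, 1::real) \<in> span (R ` T)" using o1 by (rule span_scale)
      have "R t - e t *\<^sub>R (0::real^'n, 1::real) \<in> span (R ` T)"
        by (rule span_diff[OF _ s]) (simp add: span_base that)
      moreover have "R t - e t *\<^sub>R (0::real^'n, 1::real) = emb (c t)" by (simp add: emb_def R_def prod_eq_iff)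
      ultimately show ?thesis by simp
    qed
    then have X: "insert (0, 1) (emb ` c ` T) \<subseteq> span (R ` T)" using o1 by auto
    have "dim (insert (0, 1) (emb ` c ` T)) \<le> card (R ` T)"
      by (rule dim_le_card[OF X]) (simp add: finT)
    also have "\<dots> \<le> card T" by (rule card_image_le[OF finT])
    finally have d1: "dim (insert (0, 1) (emb ` c ` T)) \<le> card T" .
    have "snd p = 0" if "p \<in> span (emb ` c ` T)" for p
      by (rule real_vector.linear_eq_0_on_span[OF linear_snd _ that]) (auto simp: emb_def)
    then have "(0::real^'n, 1::real) \<notin> span (emb ` c ` T)" by fastforce
    then have d2: "dim (insert (0, 1) (emb ` c ` T)) = dim (emb ` c ` T) + 1" by (simp add: dim_insert)
    have "fst ` (emb ` c ` T) = c ` T" by (simp add: emb_def image_image)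
    then have "dim (c ` T) \<le> dim (emb ` c ` T)" using eucl.dim_image_le[OF linear_fst, of "emb ` c ` T"] by simp
    then show False using d1 d2 dT by simp
  qed
  show ?thesis using part1 part2 by (simp add: R_def)
qed



definition Gc :: "(nat \<Rightarrow> nat) \<Rightarrow> (neuron \<Rightarrow> neuron \<Rightarrow> bool) \<Rightarrow> neuron set \<Rightarrow> neuron set
     \<Rightarrow> ('n::finite param \<Rightarrow> real) \<Rightarrow> bool" where
  "Gc width E A S \<theta> \<longleftrightarrow> ((\<exists>y. \<forall>z\<in>S. lin width E A \<theta> y (fst z) (snd z) = \<theta> (Bs z)) \<longrightarrow>
      dim ((\<lambda>z. cvec width E A \<theta> (fst z) (snd z)) ` S) = card S)"

definition rvec :: "(nat \<Rightarrow> nat) \<Rightarrow> (neuron \<Rightarrow> neuron \<Rightarrow> bool) \<Rightarrow> neuron set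
     \<Rightarrow> ('n::finite param \<Rightarrow> real) \<Rightarrow> neuron \<Rightarrow> (real ^ 'n) \<times> real" where
  "rvec width E A \<theta> t = (cvec width E A \<theta> (fst t) (snd t), dval width E A \<theta> (fst t) (snd t) - \<theta> (Bs t))"

lemma rvec_meas:
  "(\<lambda>\<theta>. rvec width E A \<theta> t) \<in> borel_measurable (PiM I (\<lambda>_. lborel :: real measure))"
proof -
  note [measurable] = comp_meas cvec_meas dval_meas
  show ?thesis unfolding rvec_def by measurable
qed

lemma generic_null:
  fixes A :: "neuron set"
  assumes "S \<subseteq> neurons d width"
  shows "\<exists>N \<in> sets (param_lebesgue d width E). emeasure (param_lebesgue d width E) N = 0 \<and>
     {\<theta> \<in> space (param_lebesgue d width E). \<not> Gc width E A S (\<theta> :: 'n::finite param \<Rightarrow> real)} \<subseteq> N"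
  using assms
proof (induction "card S" arbitrary: S rule: less_induct)
  case less
  let ?L = "param_lebesgue d width E :: ('n param \<Rightarrow> real) measure"
  have finS: "finite S" using less.prems finite_neurons finite_subset by blast
  show ?case
  proof (cases "S = {}")
    case True
    then show ?thesis by (intro bexI[of _ "{}"]) (auto simp: Gc_def)
  next
    case False
    define m where "m = Max (fst ` S)"
    have "m \<in> fst ` S" unfolding m_def using False finS by (intro Max_in) auto
    then obtain z where zS: "z \<in> S" and zm: "fst z = m" by auto
    have zmax: "fst z' \<le> fst z" if "z' \<in> S" for z'
      using that finS zm m_def by (simp add: Max_ge)
    define T where "T = S - {z}"
    have ST: "S = insert z T" "z \<notin> T" "finite T" "T \<subseteq> neurons d width"
      using zS finS less.prems by (auto simp: T_def)
    have cT: "card T < card S" unfolding T_def by (rule card_Diff1_less[OF finS zS])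
    obtain N1 where N1: "N1 \<in> sets ?L" "emeasure ?L N1 = 0"
      "{\<theta> \<in> space ?L. \<not> Gc width E A T \<theta>} \<subseteq> N1"
      using less.hyps[OF cT ST(4)] by blast
    obtain ts where ts: "set ts = T" using finite_list[OF ST(3)] by blast
    define R where "R = (\<lambda>\<theta>. rvec width E A (\<theta> :: 'n param \<Rightarrow> real))"
    have Rm: "(\<lambda>\<theta>. R \<theta> t) \<in> borel_measurable ?L" for t
      unfolding R_def param_lebesgue_def by (rule rvec_meas)
    have g1: "(\<lambda>\<theta>. gproj (\<lambda>t. R \<theta> t) ts (R \<theta> z)) \<in> borel_measurable ?L"
      by (rule gproj_measurable[OF Rm Rm])
    have g2: "(\<lambda>\<theta>. gproj (\<lambda>t. R \<theta> t) ts (0, 1)) \<in> borel_measurable ?L"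
      by (rule gproj_measurable[OF Rm]) simp
    define N2 where "N2 = {\<theta> \<in> space ?L. gproj (\<lambda>t. R \<theta> t) ts (R \<theta> z) = R \<theta> z} \<inter>
        (space ?L - {\<theta> \<in> space ?L. gproj (\<lambda>t. R \<theta> t) ts (0, 1) = (0, 1)})"
    have N2m: "N2 \<in> sets ?L"
    proof -
      have "{\<theta> \<in> space ?L. gproj (\<lambda>t. R \<theta> t) ts (R \<theta> z) = R \<theta> z} \<in> sets ?L"
        using g1 Rm[of z] by measurable
      moreover have "{\<theta> \<in> space ?L. gproj (\<lambda>t. R \<theta> t) ts (0, 1) = (0, 1)} \<in> sets ?L"
        using g2 by measurable
      ultimately show ?thesis unfolding N2_def by auto
    qed
    have N2mem: "\<theta> \<in> N2 \<longleftrightarrow> \<theta> \<in> space ?L \<and> R \<theta> z \<in> span (R \<theta> ` T) \<and> (0, 1) \<notin> span (R \<theta> ` T)" for \<theta>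
      unfolding N2_def using gproj_span_iff[of "R \<theta> z" "R \<theta>" ts] gproj_span_iff[of "(0,1)" "R \<theta>" ts] ts
      by auto
    have zN: "z \<in> neurons d width" using zS less.prems by auto
    have Bsz: "Bs z \<in> params d width E" unfolding params_def using zN by blast
    have N20: "emeasure ?L N2 = 0"
      unfolding param_lebesgue_def
    proof (rule section_null[OF finite_params Bsz])
      show "N2 \<in> sets (PiM (params d width E) (\<lambda>_. lborel))" using N2m by (simp add: param_lebesgue_def)
    next
      fix \<theta> \<theta>' assume th: "\<theta> \<in> N2" "\<theta>' \<in> N2" and agree: "\<And>q. q \<noteq> Bs z \<Longrightarrow> \<theta> q = \<theta>' q"
      have cv: "cvec width E A \<theta> l j = cvec width E A \<theta>' l j" for l j
        by (rule cvec_indep) (use agree in blast)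
      have dv: "dval width E A \<theta> (fst t) j = dval width E A \<theta>' (fst t) j" if "t \<in> S" for t j
        by (rule dval_indep[where z=z and \<theta>=\<theta> and \<theta>'=\<theta>', OF agree zmax[OF that]])
      have RT: "R \<theta> t = R \<theta>' t" if "t \<in> T" for t
      proof -
        have "t \<noteq> z" using that ST by auto
        then have "\<theta> (Bs t) = \<theta>' (Bs t)" using agree by auto
        then show ?thesis using cv dv[of t] that ST by (simp add: R_def rvec_def)
      qed
      then have img: "R \<theta> ` T = R \<theta>' ` T" by (auto intro: image_cong)
      have in1: "R \<theta> z \<in> span (R \<theta> ` T)" and nin: "(0, 1) \<notin> span (R \<theta> ` T)" using th(1) N2mem by auto
      have in2: "R \<theta>' z \<in> span (R \<theta> ` T)" using th(2) N2mem img by auto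
      have diff: "R \<theta> z - R \<theta>' z = (\<theta>' (Bs z) - \<theta> (Bs z)) *\<^sub>R (0, 1)"
        using cv dv[OF zS] by (simp add: R_def rvec_def prod_eq_iff)
      have dsp: "(\<theta>' (Bs z) - \<theta> (Bs z)) *\<^sub>R (0::real^'n, 1::real) \<in> span (R \<theta> ` T)"
        using span_diff[OF in1 in2] unfolding diff .
      show "\<theta> (Bs z) = \<theta>' (Bs z)"
      proof (rule ccontr)
        assume ne: "\<theta> (Bs z) \<noteq> \<theta>' (Bs z)"
        have "inverse (\<theta>' (Bs z) - \<theta> (Bs z)) *\<^sub>R ((\<theta>' (Bs z) - \<theta> (Bs z)) *\<^sub>R (0::real^'n, 1::real)) \<in> span (R \<theta> ` T)"
          by (rule span_scale[OF dsp])
        then have "(0::real^'n, 1::real) \<in> span (R \<theta> ` T)" using ne by simp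
        with nin show False by simp
      qed
    qed
    have sub: "{\<theta> \<in> space ?L. \<not> Gc width E A S \<theta>} \<subseteq> N1 \<union> N2"
    proof
      fix \<theta> assume "\<theta> \<in> {\<theta> \<in> space ?L. \<not> Gc width E A S \<theta>}"
      then have sp: "\<theta> \<in> space ?L" and nG: "\<not> Gc width E A S \<theta>" by auto
      show "\<theta> \<in> N1 \<union> N2"
      proof (cases "Gc width E A T \<theta>")
        case False
        then show ?thesis using N1(3) sp by auto
      next
        case True
        define c where "c = (\<lambda>t. cvec width E A \<theta> (fst t) (snd t))"
        define e where "e = (\<lambda>t. dval width E A \<theta> (fst t) (snd t) - \<theta> (Bs t))"
        from nG obtain y where y: "\<forall>z\<in>S. lin width E A \<theta> y (fst z) (snd z) = \<theta> (Bs z)"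
          and dS: "dim (c ` S) \<noteq> card S" by (auto simp: Gc_def c_def)
        have dT: "dim (c ` T) = card T" using True y ST(1) by (auto simp: Gc_def c_def)
        have y': "\<forall>t\<in>insert z T. c t \<bullet> y + e t = 0"
          using y ST(1) by (auto simp: c_def e_def lin_def inner_commute)
        have "(c z, e z) \<in> span ((\<lambda>t. (c t, e t)) ` T) \<and> (0, 1) \<notin> span ((\<lambda>t. (c t, e t)) ` T)"
          by (rule step_alg[OF ST(3) ST(2) y' dT]) (use dS ST(1) in simp)
        moreover have "R \<theta> = (\<lambda>t. (c t, e t))" by (auto simp: R_def rvec_def c_def e_def)
        ultimately show ?thesis using N2mem sp by auto
      qed
    qed
    have "N1 \<in> null_sets ?L" "N2 \<in> null_sets ?L" using N1 N2m N20 by (auto simp: null_sets_def)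
    then have "N1 \<union> N2 \<in> null_sets ?L" by (rule null_sets.Un)
    then show ?thesis using sub by (auto simp: null_sets_def)
  qed
qed



theorem mainTheorem12:
  fixes d :: nat and width :: "nat \<Rightarrow> nat" and E :: "neuron \<Rightarrow> neuron \<Rightarrow> bool"
    and k :: nat and \<mu> :: "('n::finite param \<Rightarrow> real) measure"
  assumes "prob_space \<mu>"
    and "sets \<mu> = sets (param_lebesgue d width E)"
    and "absolutely_continuous (param_lebesgue d width E) \<mu>"
  shows "AE \<theta> in \<mu>. \<forall>x \<in> Xk d width E \<theta> k. \<exists>\<epsilon>>0. \<exists>P.
           affine P \<and> aff_dim P = int CARD('n) - int k \<and>
           Xk d width E \<theta> k \<inter> ball x \<epsilon> = P \<inter> ball x \<epsilon>"
proof -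
  let ?L = "param_lebesgue d width E :: ('n param \<Rightarrow> real) measure"
  have sp: "space \<mu> = space ?L" using assms(2) by (rule sets_eq_imp_space_eq)
  have nullT: "N \<in> null_sets \<mu>" if "N \<in> sets ?L" "emeasure ?L N = 0" for N
    using assms(3) that by (auto simp: absolutely_continuous_def null_sets_def)
  have AEG: "AE \<theta> in \<mu>. \<forall>A\<in>Pow (neurons d width). \<forall>S\<in>Pow (neurons d width). Gc width E A S \<theta>"
  proof (intro AE_finite_allI)
    show "finite (Pow (neurons d width))" using finite_neurons by simp
    then show "finite (Pow (neurons d width))" .
  next
    fix A S assume "A \<in> Pow (neurons d width)" "S \<in> Pow (neurons d width)"
    then obtain N where N: "N \<in> sets ?L" "emeasure ?L N = 0" "{\<theta> \<in> space ?L. \<not> Gc width E A S \<theta>} \<subseteq> N"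
      using generic_null[of S d width E A] by auto
    show "AE \<theta> in \<mu>. Gc width E A S \<theta>"
      by (rule AE_I'[OF nullT[OF N(1,2)]]) (use N(3) sp in auto)
  qed
  show ?thesis using AEG
  proof (rule eventually_mono)
    fix \<theta> :: "'n param \<Rightarrow> real"
    assume G: "\<forall>A\<in>Pow (neurons d width). \<forall>S\<in>Pow (neurons d width). Gc width E A S \<theta>"
    show "\<forall>x \<in> Xk d width E \<theta> k. \<exists>\<epsilon>>0. \<exists>P.
           affine P \<and> aff_dim P = int CARD('n) - int k \<and>
           Xk d width E \<theta> k \<inter> ball x \<epsilon> = P \<inter> ball x \<epsilon>"
    proof
      fix x assume x: "x \<in> Xk d width E \<theta> k"
      define S where "S = {z \<in> neurons d width. x \<in> Hz width E \<theta> z}"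
      define A where "A = {z \<in> neurons d width. preact width E \<theta> x (fst z) (snd z) > \<theta> (Bs z)}"
      have cS: "card S = k" using local_structure(1)[OF x] by (simp add: S_def)
      obtain \<epsilon> where \<epsilon>: "\<epsilon> > 0" and iff: "\<And>y. y \<in> ball x \<epsilon> \<Longrightarrow> (y \<in> Xk d width E \<theta> k \<longleftrightarrow>
            (\<forall>z\<in>S. lin width E A \<theta> y (fst z) (snd z) = \<theta> (Bs z)))"
        using local_structure(2)[OF x] unfolding S_def A_def by blast
      have xs: "\<forall>z\<in>S. lin width E A \<theta> x (fst z) (snd z) = \<theta> (Bs z)"
        using iff[of x] \<epsilon> x by simp
      have "A \<in> Pow (neurons d width)" "S \<in> Pow (neurons d width)" by (auto simp: S_def A_def)
      then have "Gc width E A S \<theta>" using G by blast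
      then have dS: "dim ((\<lambda>z. cvec width E A \<theta> (fst z) (snd z)) ` S) = k"
        using xs cS by (auto simp: Gc_def)
      define c where "c = (\<lambda>z. cvec width E A \<theta> (fst z) (snd z))"
      define g where "g = (\<lambda>z. \<theta> (Bs z) - dval width E A \<theta> (fst z) (snd z))"
      define P where "P = {y. \<forall>z\<in>S. c z \<bullet> y = g z}"
      have xP: "\<forall>z\<in>S. c z \<bullet> x = g z" using xs by (auto simp: c_def g_def lin_def)
      have aff: "affine P" and ad: "aff_dim P = int CARD('n) - int (dim (c ` S))"
        using affine_solution_set[OF xP] by (auto simp: P_def)
      have linP: "(\<forall>z\<in>S. lin width E A \<theta> y (fst z) (snd z) = \<theta> (Bs z)) \<longleftrightarrow> y \<in> P" for y
        by (simp add: P_def c_def g_def lin_def eq_diff_eq)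
      have "Xk d width E \<theta> k \<inter> ball x \<epsilon> = P \<inter> ball x \<epsilon>"
      proof (intro set_eqI)
        fix y
        show "y \<in> Xk d width E \<theta> k \<inter> ball x \<epsilon> \<longleftrightarrow> y \<in> P \<inter> ball x \<epsilon>"
          using iff[of y] linP[of y] by blast
      qed
      then show "\<exists>\<epsilon>>0. \<exists>P. affine P \<and> aff_dim P = int CARD('n) - int k \<and>
           Xk d width E \<theta> k \<inter> ball x \<epsilon> = P \<inter> ball x \<epsilon>"
        using \<epsilon> aff ad dS by (auto simp: c_def)
    qed
  qed
qed


end
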